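(* For every boosted instance $I=(G,t,t^* )$ and every boost action $B=(q,\tau)$ with $\tau\ge t^*_q$, $\mathrm{Win}(I,B)\ge 0$.
   Context: $G=(V,E,c)$ is an undirected graph with edge costs $c\ge0$; $\delta(S)$ denotes the edges with exactly one endpoint in $S$. Shadow moat growing on $(G,s)$, for $s:V\to\mathbb{R}_{\ge0}$: continuous process in time $\tau\ge0$ maintaining a forest (initially empty), its components, and $y_S\ge0$ (initially $0$); at time $\tau$ a component $C$ is active iff some $w\in C$ has $s_w>\tau$, and each active $C$ increases $y_C$ at rate $1$; an edge $e$ between different components with $\sum_{S:e\in\delta(S)}y_S=c_e$ is added and the components merge (ties processed by a fixed rule); stop when nothing is active. A boosted instance is $I=(G,t,t^* )$ with $t,t^*:V\to\mathbb{R}_{\ge0}$ and $t^*_v\ge t_v$ for all $v$. Run shadow moat growing on $(G,t^* )$; at each moment $\tau$, each active component $C$ contributes its growth to $y_{\mathrm{base}}$ if some $w\in C$ has $t_w>\tau$, and to $y_{\mathrm{add}}$ otherwise; so $y_{\mathrm{base}}+y_{\mathrm{add}}=\sum_S y_S$. A boost action $B=(q,\tau)$ with $\tau\ge t^*_q$ yields $\mathrm{WithBoost}(I,B)=(G,t,t^{*\prime})$ where $t^{*\prime}_q=\tau$ and $t^{*\prime}_v=t^*_v$ otherwise. If $(y_{\mathrm{base}},y_{\mathrm{add}})$ and $(y'_{\mathrm{base}},y'_{\mathrm{add}})$ are these quantities for $I$ and $\mathrm{WithBoost}(I,B)$, then $\mathrm{Win}(I,B)=y_{\mathrm{base}}-y'_{\mathrm{base}}$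 and $\mathrm{Loss}(I,B)=y'_{\mathrm{add}}-y_{\mathrm{add}}$. *)

theory Defs
  imports Complex_Main
begin

text \<open>Graph: finite vertex set V, edges E given as 2-element vertex sets, costs c.
  Shadow moat growing is simulated event by event (phases between consecutive
  merge/deactivation events).\<close>

record 'v mstate =
  time :: real
  comps :: "'v set set"
  yv :: "'v set \<Rightarrow> real"
  ybase :: real
  yadd :: real

definition graph_ok :: "'v set \<Rightarrow> 'v set set \<Rightarrow> ('v set \<Rightarrow> real) \<Rightarrow> bool" where
  "graph_ok V E c \<longleftrightarrow> finite V \<and> (\<forall>e\<in>E. e \<subseteq> V \<and> card e = 2) \<and> (\<forall>e\<in>E. c e \<ge> 0)"

definition boosted_instance ::
  "'v set \<Rightarrow> 'v set set \<Rightarrow> ('v set \<Rightarrow> real) \<Rightarrow> ('v \<Rightarrow> real) \<Rightarrow> ('v \<Rightarrow> real) \<Rightarrow> bool" where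
  "boosted_instance V E c t ts \<longleftrightarrow> graph_ok V E c \<and> (\<forall>v\<in>V. 0 \<le> t v \<and> t v \<le> ts v)"

definition delta :: "'v set set \<Rightarrow> 'v set \<Rightarrow> 'v set set" where
  "delta E S = {e\<in>E. card (e \<inter> S) = 1}"

text \<open>Load of an edge: sum of y_S over S with e in delta(S) (y is zero outside subsets of V).\<close>
definition load :: "'v set \<Rightarrow> 'v set set \<Rightarrow> ('v set \<Rightarrow> real) \<Rightarrow> 'v set \<Rightarrow> real" where
  "load V E y e = (\<Sum>S\<in>Pow V. if e \<in> delta E S then y S else 0)"

definition is_active :: "('v \<Rightarrow> real) \<Rightarrow> real \<Rightarrow> 'v set \<Rightarrow> bool" where
  "is_active s \<tau> C \<longleftrightarrow> (\<exists>w\<in>C. s w > \<tau>)"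

definition crossing :: "'v set set \<Rightarrow> 'v set \<Rightarrow> bool" where
  "crossing P e \<longleftrightarrow> \<not> (\<exists>C\<in>P. e \<subseteq> C)"

definition tight_edges ::
  "'v set \<Rightarrow> 'v set set \<Rightarrow> ('v set \<Rightarrow> real) \<Rightarrow> 'v set set \<Rightarrow> ('v set \<Rightarrow> real) \<Rightarrow> 'v set set" where
  "tight_edges V E c P y = {e\<in>E. crossing P e \<and> load V E y e = c e}"

definition merge :: "'v set \<Rightarrow> 'v set set \<Rightarrow> 'v set set \<Rightarrow> 'v set set" where
  "merge V P T =
     (let R = {(a,b). \<exists>C\<in>P. a \<in> C \<and> b \<in> C} \<union> {(a,b). {a,b} \<in> T}
      in (\<lambda>u. {w\<in>V. (u,w) \<in> R\<^sup>*}) ` V)"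

text \<open>Number of active components containing an endpoint of e (growth rate of its load).\<close>
definition rate :: "('v \<Rightarrow> real) \<Rightarrow> real \<Rightarrow> 'v set set \<Rightarrow> 'v set \<Rightarrow> nat" where
  "rate s \<tau> P e = card {C\<in>P. is_active s \<tau> C \<and> e \<inter> C \<noteq> {}}"

text \<open>One phase of shadow moat growing on (G,s); the base/add split uses t.\<close>
definition mg_step ::
  "'v set \<Rightarrow> 'v set set \<Rightarrow> ('v set \<Rightarrow> real) \<Rightarrow> ('v \<Rightarrow> real) \<Rightarrow> ('v \<Rightarrow> real)
    \<Rightarrow> 'v mstate \<Rightarrow> 'v mstate" where
  "mg_step V E c s t st =
    (let \<tau> = time st; P = comps st; y = yv st;
         A = {C\<in>P. is_active s \<tau> C}
     in if A = {} then st else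
       (let ET = {(c e - load V E y e) / real (rate s \<tau> P e) | e.
                     e \<in> E \<and> crossing P e \<and> rate s \<tau> P e > 0};
            DT = {Max (s ` C) - \<tau> | C. C \<in> A};
            \<Delta> = Min (ET \<union> DT);
            y' = (\<lambda>S. if S \<in> A then y S + \<Delta> else y S);
            bc = (\<Sum>C\<in>A. min \<Delta> (max 0 (Max (t ` C) - \<tau>)))
        in \<lparr>time = \<tau> + \<Delta>, comps = merge V P (tight_edges V E c P y'), yv = y',
            ybase = ybase st + bc, yadd = yadd st + real (card A) * \<Delta> - bc\<rparr>))"

definition mg_init :: "'v set \<Rightarrow> 'v set set \<Rightarrow> ('v set \<Rightarrow> real) \<Rightarrow> 'v mstate" where
  "mg_init V E c =
    (let P0 = (\<lambda>v. {v}) ` V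
     in \<lparr>time = 0, comps = merge V P0 (tight_edges V E c P0 (\<lambda>_. 0)), yv = (\<lambda>_. 0),
         ybase = 0, yadd = 0\<rparr>)"

text \<open>The process has at most 2|V| phases (potential #components + #active components
  strictly decreases each phase), and stopped states are fixed points of mg_step,
  so iterating 4|V|+4 times yields the final state.\<close>
definition mg_run ::
  "'v set \<Rightarrow> 'v set set \<Rightarrow> ('v set \<Rightarrow> real) \<Rightarrow> ('v \<Rightarrow> real) \<Rightarrow> ('v \<Rightarrow> real) \<Rightarrow> 'v mstate" where
  "mg_run V E c t ts = (mg_step V E c ts t ^^ (4 * card V + 4)) (mg_init V E c)"

definition y_base :: "'v set \<Rightarrow> 'v set set \<Rightarrow> ('v set \<Rightarrow> real) \<Rightarrow> ('v \<Rightarrow> real) \<Rightarrow> ('v \<Rightarrow> real) \<Rightarrow> real" where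
  "y_base V E c t ts = ybase (mg_run V E c t ts)"

definition y_add :: "'v set \<Rightarrow> 'v set set \<Rightarrow> ('v set \<Rightarrow> real) \<Rightarrow> ('v \<Rightarrow> real) \<Rightarrow> ('v \<Rightarrow> real) \<Rightarrow> real" where
  "y_add V E c t ts = yadd (mg_run V E c t ts)"

definition with_boost :: "('v \<Rightarrow> real) \<Rightarrow> 'v \<Rightarrow> real \<Rightarrow> ('v \<Rightarrow> real)" where
  "with_boost ts q \<tau> = ts(q := \<tau>)"

definition Win ::
  "'v set \<Rightarrow> 'v set set \<Rightarrow> ('v set \<Rightarrow> real) \<Rightarrow> ('v \<Rightarrow> real) \<Rightarrow> ('v \<Rightarrow> real) \<Rightarrow> 'v \<Rightarrow> real \<Rightarrow> real" where
  "Win V E c t ts q \<tau> = y_base V E c t ts - y_base V E c t (with_boost ts q \<tau>)"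

definition Loss ::
  "'v set \<Rightarrow> 'v set set \<Rightarrow> ('v set \<Rightarrow> real) \<Rightarrow> ('v \<Rightarrow> real) \<Rightarrow> ('v \<Rightarrow> real) \<Rightarrow> 'v \<Rightarrow> real \<Rightarrow> real" where
  "Loss V E c t ts q \<tau> = y_add V E c t (with_boost ts q \<tau>) - y_add V E c t ts"

end

theory Submission
  imports Defs
begin


definition is_part :: "'v set \<Rightarrow> 'v set set \<Rightarrow> bool" where
  "is_part V P \<longleftrightarrow> (\<forall>C\<in>P. C \<noteq> {} \<and> C \<subseteq> V) \<and> (\<forall>C\<in>P. \<forall>D\<in>P. C \<inter> D \<noteq> {} \<longrightarrow> C = D) \<and> \<Union>P = V"

definition refines :: "'v set set \<Rightarrow> 'v set set \<Rightarrow> bool" where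
  "refines P Q \<longleftrightarrow> (\<forall>C\<in>P. \<exists>D\<in>Q. C \<subseteq> D)"

definition mrel :: "'v set set \<Rightarrow> 'v set set \<Rightarrow> ('v \<times> 'v) set" where
  "mrel P T = {(a,b). \<exists>C\<in>P. a \<in> C \<and> b \<in> C} \<union> {(a,b). {a,b} \<in> T}"

definition cls :: "'v set \<Rightarrow> 'v set set \<Rightarrow> 'v set set \<Rightarrow> 'v \<Rightarrow> 'v set" where
  "cls V P T u = {w\<in>V. (u,w) \<in> (mrel P T)\<^sup>*}"

lemma merge_cls: "merge V P T = cls V P T ` V"
  unfolding merge_def cls_def mrel_def Let_def by simp

lemma sym_mrel: "sym (mrel P T)"
  unfolding sym_def mrel_def by (auto simp: insert_commute)

lemma rtr_sym: "(a,b) \<in> (mrel P T)\<^sup>* \<Longrightarrow> (b,a) \<in> (mrel P T)\<^sup>*"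
  using sym_mrel sym_rtrancl by (metis symD)

lemma cls_self: "u \<in> V \<Longrightarrow> u \<in> cls V P T u"
  unfolding cls_def by auto

lemma cls_eq: assumes "(u,v) \<in> (mrel P T)\<^sup>*" shows "cls V P T u = cls V P T v"
  unfolding cls_def using assms rtr_sym[OF assms]
  by (auto intro: rtrancl_trans)

lemma cls_mem_eq: assumes "x \<in> cls V P T u" shows "cls V P T x = cls V P T u"
  using assms cls_eq[of u x P T V] unfolding cls_def by auto

lemma merge_part: assumes "finite V" shows "is_part V (merge V P T)"
proof -
  have a: "\<forall>C\<in>merge V P T. C \<noteq> {} \<and> C \<subseteq> V"
    unfolding merge_cls using cls_self by (fastforce simp: cls_def)
  have b: "\<forall>C\<in>merge V P T. \<forall>D\<in>merge V P T. C \<inter> D \<noteq> {} \<longrightarrow> C = D"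
  proof (intro ballI impI)
    fix C D assume "C \<in> merge V P T" "D \<in> merge V P T" "C \<inter> D \<noteq> {}"
    then obtain u v x where "C = cls V P T u" "D = cls V P T v" "x \<in> C" "x \<in> D"
      unfolding merge_cls by blast
    then show "C = D" using cls_mem_eq by metis
  qed
  have c: "\<Union>(merge V P T) = V"
    unfolding merge_cls using cls_self by (fastforce simp: cls_def)
  show ?thesis unfolding is_part_def using a b c by blast
qed

lemma refines_merge: assumes "is_part V P" shows "refines P (merge V P T)"
  unfolding refines_def
proof
  fix C assume C: "C \<in> P"
  have ne: "C \<noteq> {}" and CV: "C \<subseteq> V" using assms C unfolding is_part_def by auto
  then obtain u where u: "u \<in> C" by auto
  have uV: "u \<in> V" using CV u by auto
  have "(u,x) \<in> (mrel P T)\<^sup>*" if "x \<in> C" for x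
  proof -
    have "(u,x) \<in> mrel P T" using C u that unfolding mrel_def by auto
    then show ?thesis by simp
  qed
  then have "C \<subseteq> cls V P T u"
    using CV unfolding cls_def by auto
  moreover have "cls V P T u \<in> merge V P T" using uV unfolding merge_cls by simp
  ultimately show "\<exists>D\<in>merge V P T. C \<subseteq> D" by auto
qed

lemma refines_trans: "refines P Q \<Longrightarrow> refines Q R \<Longrightarrow> refines P R"
  unfolding refines_def by (meson subset_trans)

lemma refines_refl: "refines P P"
  unfolding refines_def by blast

lemma part_block: "is_part V Q \<Longrightarrow> x \<in> V \<Longrightarrow> \<exists>D\<in>Q. x \<in> D"
  unfolding is_part_def by blast

lemma part_uniq: "is_part V Q \<Longrightarrow> D \<in> Q \<Longrightarrow> D' \<in> Q \<Longrightarrow> x \<in> D \<Longrightarrow> x \<in> D' \<Longrightarrow> D = D'"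
  unfolding is_part_def by blast

lemma merge_refines:
  assumes PQ: "refines P Q" and Q: "is_part V Q" and P: "is_part V P"
    and T: "\<forall>e\<in>T. \<exists>D\<in>Q. e \<subseteq> D"
  shows "refines (merge V P T) Q"
  unfolding refines_def merge_cls
proof
  fix X assume "X \<in> cls V P T ` V"
  then obtain u where u: "u \<in> V" and X: "X = cls V P T u" by blast
  obtain D where D: "D \<in> Q" "u \<in> D" using part_block[OF Q u] by blast
  have "\<And>x. (u,x) \<in> (mrel P T)\<^sup>* \<Longrightarrow> x \<in> D"
  proof -
    fix x assume "(u,x) \<in> (mrel P T)\<^sup>*"
    then show "x \<in> D"
    proof (induction rule: rtrancl_induct)
      case base then show ?case using D by simp
    next
      case (step y z)
      from step.hyps(2) consider (a) "\<exists>C\<in>P. y \<in> C \<and> z \<in> C" | (b) "{y,z} \<in> T"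
        unfolding mrel_def by blast
      then show ?case
      proof cases
        case a
        then obtain C where "C \<in> P" "y \<in> C" "z \<in> C" by blast
        then obtain D' where "D' \<in> Q" "C \<subseteq> D'" using PQ unfolding refines_def by blast
        then show ?thesis using part_uniq[OF Q D(1) \<open>D' \<in> Q\<close>] step.IH \<open>y \<in> C\<close> \<open>z \<in> C\<close> by blast
      next
        case b
        then obtain D' where "D' \<in> Q" "{y,z} \<subseteq> D'" using T by blast
        then show ?thesis using part_uniq[OF Q D(1) \<open>D' \<in> Q\<close>] step.IH by blast
      qed
    qed
  qed
  then show "\<exists>D\<in>Q. X \<subseteq> D" using D X unfolding cls_def by blast
qed

lemma part_finite: assumes "finite V" "is_part V P" shows "finite P"
proof -
  have "P \<subseteq> Pow V" using assms(2) unfolding is_part_def by auto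
  then show ?thesis using assms(1) finite_subset by auto
qed

lemma part_block_finite: assumes "finite V" "is_part V P" "C \<in> P" shows "finite C"
proof -
  have "C \<subseteq> V" using assms(2,3) unfolding is_part_def by auto
  then show ?thesis using assms(1) finite_subset by auto
qed

lemma part_some: "is_part V P \<Longrightarrow> C \<in> P \<Longrightarrow> (SOME x. x \<in> C) \<in> C"
  unfolding is_part_def by (metis ex_in_conv someI_ex)

lemma part_card: assumes "finite V" "is_part V P" shows "card P \<le> card V"
proof -
  define f where "f C = (SOME x. x \<in> C)" for C :: "'a set"
  have fC: "C \<in> P \<Longrightarrow> f C \<in> C" for C using part_some[OF assms(2)] unfolding f_def by auto
  have "inj_on f P"
  proof (rule inj_onI)
    fix C D assume "C \<in> P" "D \<in> P" "f C = f D"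
    then show "C = D" using fC[of C] fC[of D] part_uniq[OF assms(2)] by metis
  qed
  moreover have "f ` P \<subseteq> V" using fC assms(2) unfolding is_part_def by auto
  ultimately show ?thesis using card_inj_on_le assms(1) by blast
qed

lemma merge_card:
  assumes V: "finite V" and P: "is_part V P"
  shows "card (merge V P T) \<le> card P"
    and "e \<in> T \<Longrightarrow> card e = 2 \<Longrightarrow> e \<subseteq> V \<Longrightarrow> crossing P e \<Longrightarrow> card (merge V P T) < card P"
proof -
  define F where "F C = cls V P T (SOME x. x \<in> C)" for C
  have some: "C \<in> P \<Longrightarrow> (SOME x. x \<in> C) \<in> C" for C using part_some[OF P] by auto
  have Fx: "F C = cls V P T x" if "C \<in> P" "x \<in> C" for C x
  proof -
    have "((SOME x. x \<in> C), x) \<in> mrel P T" using some[OF that(1)] that unfolding mrel_def by auto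
    then show ?thesis unfolding F_def by (intro cls_eq) simp
  qed
  have sub1: "merge V P T \<subseteq> F ` P"
  proof
    fix X assume "X \<in> merge V P T"
    then obtain u where u: "u \<in> V" "X = cls V P T u" unfolding merge_cls by auto
    obtain C where C: "C \<in> P" "u \<in> C" using part_block[OF P u(1)] by auto
    have "X = F C" using Fx[OF C] u(2) by simp
    then show "X \<in> F ` P" using C(1) by simp
  qed
  have sub2: "F ` P \<subseteq> merge V P T"
  proof
    fix X assume "X \<in> F ` P"
    then obtain C where C: "C \<in> P" "X = F C" by auto
    have "(SOME x. x \<in> C) \<in> V" using some[OF C(1)] C(1) P unfolding is_part_def by auto
    then show "X \<in> merge V P T" unfolding merge_cls C(2) F_def by simp
  qed
  have eq: "merge V P T = F ` P" using sub1 sub2 by (rule equalityI)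
  have fin: "finite P" using part_finite[OF V P] .
  show "card (merge V P T) \<le> card P" unfolding eq using card_image_le[OF fin] .
  assume e: "e \<in> T" "card e = 2" "e \<subseteq> V" "crossing P e"
  obtain a b where ab: "e = {a,b}" "a \<noteq> b" using e(2) card_2_iff by metis
  have aV: "a \<in> V" and bV: "b \<in> V" using e(3) ab by auto
  obtain C1 where C1: "C1 \<in> P" "a \<in> C1" using part_block[OF P aV] by auto
  obtain C2 where C2: "C2 \<in> P" "b \<in> C2" using part_block[OF P bV] by auto
  have "C1 \<noteq> C2"
  proof
    assume "C1 = C2"
    then have "e \<subseteq> C1" using ab C1 C2 by auto
    then show False using e(4) C1(1) unfolding crossing_def by auto
  qed
  moreover have "F C1 = F C2"
  proof -
    have "(a,b) \<in> mrel P T" using e(1) ab unfolding mrel_def by auto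
    then have "cls V P T a = cls V P T b" by (intro cls_eq) simp
    then show ?thesis using Fx[OF C1] Fx[OF C2] by simp
  qed
  ultimately have "\<not> inj_on F P" using C1 C2 unfolding inj_on_def by auto
  then have "card (F ` P) \<noteq> card P" using inj_on_iff_eq_card[OF fin, of F] by blast
  then show "card (merge V P T) < card P" unfolding eq
    using card_image_le[OF fin, of F] by linarith
qed



lemma edge2: "card e = 2 \<Longrightarrow> \<exists>a b. e = {a,b} \<and> a \<noteq> b"
  using card_2_iff by metis

lemma cross_card1:
  assumes "card e = 2" "\<not> e \<subseteq> C"
  shows "card (e \<inter> C) = 1 \<longleftrightarrow> e \<inter> C \<noteq> {}"
proof -
  obtain a b where ab: "e = {a,b}" "a \<noteq> b" using edge2[OF assms(1)] by blast
  have "\<not> (a \<in> C \<and> b \<in> C)" using assms(2) ab by auto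
  then consider "a \<in> C" "b \<notin> C" | "a \<notin> C" "b \<in> C" | "a \<notin> C" "b \<notin> C" by blast
  then show ?thesis
  proof cases
    case 1 then have "e \<inter> C = {a}" using ab by auto
    then show ?thesis by simp
  next
    case 2 then have "e \<inter> C = {b}" using ab by auto
    then show ?thesis by simp
  next
    case 3 then have "e \<inter> C = {}" using ab by auto
    then show ?thesis by simp
  qed
qed

locale mg =
  fixes V :: "'v set" and E :: "'v set set" and c :: "'v set \<Rightarrow> real" and t :: "'v \<Rightarrow> real"
  assumes gok: "graph_ok V E c"
begin

lemma finV: "finite V" using gok unfolding graph_ok_def by auto
lemma Ecard: "e \<in> E \<Longrightarrow> card e = 2" using gok unfolding graph_ok_def by auto
lemma EV: "e \<in> E \<Longrightarrow> e \<subseteq> V" using gok unfolding graph_ok_def by auto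
lemma cpos: "e \<in> E \<Longrightarrow> c e \<ge> 0" using gok unfolding graph_ok_def by auto
lemma finE: "finite E"
proof -
  have "E \<subseteq> Pow V" using EV by auto
  then show ?thesis using finV finite_subset by auto
qed

definition Aset :: "('v \<Rightarrow> real) \<Rightarrow> 'v mstate \<Rightarrow> 'v set set" where
  "Aset s st = {C\<in>comps st. is_active s (time st) C}"
definition ETs :: "('v \<Rightarrow> real) \<Rightarrow> 'v mstate \<Rightarrow> real set" where
  "ETs s st = {(c e - load V E (yv st) e) / real (rate s (time st) (comps st) e) | e.
                     e \<in> E \<and> crossing (comps st) e \<and> rate s (time st) (comps st) e > 0}"
definition DTs :: "('v \<Rightarrow> real) \<Rightarrow> 'v mstate \<Rightarrow> real set" where
  "DTs s st = {Max (s ` C) - time st | C. C \<in> Aset s st}"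
definition Dl :: "('v \<Rightarrow> real) \<Rightarrow> 'v mstate \<Rightarrow> real" where
  "Dl s st = Min (ETs s st \<union> DTs s st)"
definition ynew :: "('v \<Rightarrow> real) \<Rightarrow> 'v mstate \<Rightarrow> 'v set \<Rightarrow> real" where
  "ynew s st = (\<lambda>S. if S \<in> Aset s st then yv st S + Dl s st else yv st S)"

abbreviation step where "step s \<equiv> mg_step V E c s t"

lemma step_stop: "Aset s st = {} \<Longrightarrow> step s st = st"
  unfolding mg_step_def Aset_def Let_def by simp

lemma step_go:
  assumes "Aset s st \<noteq> {}"
  shows "time (step s st) = time st + Dl s st"
    and "comps (step s st) = merge V (comps st) (tight_edges V E c (comps st) (ynew s st))"
    and "yv (step s st) = ynew s st"
    and "ybase (step s st) = ybase st + (\<Sum>C\<in>Aset s st. min (Dl s st) (max 0 (Max (t ` C) - time st)))"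
proof -
  have ne: "{C\<in>comps st. is_active s (time st) C} \<noteq> {}" using assms unfolding Aset_def .
  show "time (step s st) = time st + Dl s st"
    and "comps (step s st) = merge V (comps st) (tight_edges V E c (comps st) (ynew s st))"
    and "yv (step s st) = ynew s st"
    and "ybase (step s st) = ybase st + (\<Sum>C\<in>Aset s st. min (Dl s st) (max 0 (Max (t ` C) - time st)))"
    unfolding mg_step_def Aset_def Let_def Dl_def ETs_def DTs_def ynew_def if_not_P[OF ne]
    by simp_all
qed

definition Wf :: "'v mstate \<Rightarrow> bool" where
  "Wf st \<longleftrightarrow> is_part V (comps st) \<and> (\<forall>e\<in>E. crossing (comps st) e \<longrightarrow> load V E (yv st) e < c e)"

lemma rate_cross:
  assumes P: "is_part V P" and e: "e \<in> E" "crossing P e"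
  shows "{C\<in>P. is_active s \<tau> C \<and> e \<inter> C \<noteq> {}} = {C\<in>P. is_active s \<tau> C \<and> card (e \<inter> C) = 1}"
proof -
  have "\<And>C. C \<in> P \<Longrightarrow> \<not> e \<subseteq> C" using e(2) unfolding crossing_def by auto
  then show ?thesis using cross_card1[OF Ecard[OF e(1)]] by auto
qed

lemma load_add:
  assumes P: "is_part V P" and e: "e \<in> E" "crossing P e" and A: "A = {C\<in>P. is_active s \<tau> C}"
  shows "load V E (\<lambda>S. if S \<in> A then y S + d else y S) e = load V E y e + d * real (rate s \<tau> P e)"
proof -
  have fin: "finite (Pow V)" using finV by simp
  have split: "(if e \<in> delta E S then (if S \<in> A then y S + d else y S) else 0)
      = (if e \<in> delta E S then y S else 0) + (if e \<in> delta E S \<and> S \<in> A then d else 0)" for S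
    by auto
  have "load V E (\<lambda>S. if S \<in> A then y S + d else y S) e
      = load V E y e + (\<Sum>S\<in>Pow V. if e \<in> delta E S \<and> S \<in> A then d else 0)"
    unfolding load_def split sum.distrib by simp
  also have "(\<Sum>S\<in>Pow V. if e \<in> delta E S \<and> S \<in> A then d else 0) = (\<Sum>S\<in>{S\<in>Pow V. e \<in> delta E S \<and> S \<in> A}. d)"
    using sum.inter_filter[OF fin, of "\<lambda>_. d" "\<lambda>S. e \<in> delta E S \<and> S \<in> A"] by simp
  also have "{S\<in>Pow V. e \<in> delta E S \<and> S \<in> A} = {C\<in>P. is_active s \<tau> C \<and> e \<inter> C \<noteq> {}}"
  proof -
    have "A \<subseteq> Pow V" using A P unfolding is_part_def by auto
    then have "{S\<in>Pow V. e \<in> delta E S \<and> S \<in> A} = {C\<in>P. is_active s \<tau> C \<and> card (e \<inter> C) = 1}"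
      using A e(1) unfolding delta_def by auto
    then show ?thesis using rate_cross[OF P e] by simp
  qed
  finally show ?thesis unfolding rate_def by (simp add: mult.commute)
qed

end


context mg begin

lemma Aset_sub: "Aset s st \<subseteq> comps st" unfolding Aset_def by auto

lemma Aset_mem:
  assumes "Wf st" "C \<in> Aset s st"
  shows "C \<in> comps st" "finite C" "C \<noteq> {}" "C \<subseteq> V" "Max (s ` C) > time st"
proof -
  show C: "C \<in> comps st" using assms(2) unfolding Aset_def by auto
  have P: "is_part V (comps st)" using assms(1) unfolding Wf_def by auto
  show fC: "finite C" using part_block_finite[OF finV P C] .
  show "C \<noteq> {}" "C \<subseteq> V" using P C unfolding is_part_def by auto
  obtain w where w: "w \<in> C" "s w > time st" using assms(2) unfolding Aset_def is_active_def by auto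
  have "s w \<le> Max (s ` C)" using fC w(1) by (intro Max_ge) auto
  then show "Max (s ` C) > time st" using w(2) by linarith
qed

lemma fin_sets:
  assumes "Wf st"
  shows "finite (ETs s st \<union> DTs s st)"
proof -
  have P: "is_part V (comps st)" using assms unfolding Wf_def by auto
  have f1: "finite {e. e \<in> E \<and> crossing (comps st) e \<and> rate s (time st) (comps st) e > 0}"
    using finE by (rule finite_subset[rotated]) auto
  have "finite (ETs s st)" unfolding ETs_def by (rule finite_image_set[OF f1])
  moreover have "finite (Aset s st)" using part_finite[OF finV P] Aset_sub finite_subset by metis
  then have "finite {C. C \<in> Aset s st}" by simp
  then have "finite (DTs s st)" unfolding DTs_def by (rule finite_image_set)
  ultimately show ?thesis by simp
qed

lemma Dl_facts:
  assumes "Wf st" "Aset s st \<noteq> {}"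
  shows "Dl s st \<in> ETs s st \<union> DTs s st"
    and "\<And>x. x \<in> ETs s st \<union> DTs s st \<Longrightarrow> Dl s st \<le> x"
proof -
  have ne: "ETs s st \<union> DTs s st \<noteq> {}" using assms(2) unfolding DTs_def by auto
  show "Dl s st \<in> ETs s st \<union> DTs s st" unfolding Dl_def using Min_in[OF fin_sets[OF assms(1)] ne] .
  show "\<And>x. x \<in> ETs s st \<union> DTs s st \<Longrightarrow> Dl s st \<le> x" unfolding Dl_def
    using Min_le[OF fin_sets[OF assms(1)]] by auto
qed

lemma Dl_le_ET:
  assumes "Wf st" "Aset s st \<noteq> {}" "e \<in> E" "crossing (comps st) e" "rate s (time st) (comps st) e > 0"
  shows "Dl s st \<le> (c e - load V E (yv st) e) / real (rate s (time st) (comps st) e)"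
  using assms by (intro Dl_facts(2)) (auto simp: ETs_def)

lemma Dl_le_DT:
  assumes "Wf st" "C \<in> Aset s st"
  shows "time st + Dl s st \<le> Max (s ` C)"
proof -
  have "Dl s st \<le> Max (s ` C) - time st" using assms by (intro Dl_facts(2)) (auto simp: DTs_def)
  then show ?thesis by linarith
qed

lemma Dl_pos:
  assumes "Wf st" "Aset s st \<noteq> {}"
  shows "Dl s st > 0"
proof -
  have "x > 0" if "x \<in> ETs s st \<union> DTs s st" for x
    using that
  proof
    assume "x \<in> ETs s st"
    then obtain e where e: "e \<in> E" "crossing (comps st) e" "rate s (time st) (comps st) e > 0"
      and x: "x = (c e - load V E (yv st) e) / real (rate s (time st) (comps st) e)"
      unfolding ETs_def by auto
    have "load V E (yv st) e < c e" using assms(1) e unfolding Wf_def by auto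
    then show "x > 0" using x e(3) by simp
  next
    assume "x \<in> DTs s st"
    then obtain C where "C \<in> Aset s st" "x = Max (s ` C) - time st" unfolding DTs_def by auto
    then show "x > 0" using Aset_mem(5)[OF assms(1)] by auto
  qed
  then show ?thesis using Dl_facts(1)[OF assms] by auto
qed

lemma tight_not_cross:
  assumes "e \<in> T" "card e = 2" "e \<subseteq> V"
  shows "\<not> crossing (merge V P T) e"
proof -
  obtain a b where ab: "e = {a,b}" "a \<noteq> b" using edge2[OF assms(2)] by blast
  have aV: "a \<in> V" "b \<in> V" using ab assms(3) by auto
  have "(a,b) \<in> mrel P T" using assms(1) ab unfolding mrel_def by auto
  then have "b \<in> cls V P T a" using aV unfolding cls_def by auto
  moreover have "a \<in> cls V P T a" using cls_self[OF aV(1)] .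
  moreover have "cls V P T a \<in> merge V P T" using aV unfolding merge_cls by auto
  ultimately show ?thesis unfolding crossing_def using ab by auto
qed

lemma cross_refines: "refines P Q \<Longrightarrow> crossing Q e \<Longrightarrow> crossing P e"
  unfolding refines_def crossing_def by blast

lemma load_step:
  assumes "Wf st" "Aset s st \<noteq> {}" "e \<in> E" "crossing (comps st) e"
  shows "load V E (yv (step s st)) e = load V E (yv st) e + Dl s st * real (rate s (time st) (comps st) e)"
proof -
  have P: "is_part V (comps st)" using assms(1) unfolding Wf_def by auto
  show ?thesis unfolding step_go(3)[OF assms(2)] ynew_def
    using load_add[OF P assms(3,4), of "Aset s st" s "time st" "yv st" "Dl s st"] unfolding Aset_def by simp
qed

lemma Wf_step:
  assumes "Wf st"
  shows "Wf (step s st)"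
proof (cases "Aset s st = {}")
  case True then show ?thesis using assms step_stop by simp
next
  case False
  have P: "is_part V (comps st)" using assms(1) unfolding Wf_def by auto
  define T where "T = tight_edges V E c (comps st) (ynew s st)"
  have cp: "comps (step s st) = merge V (comps st) T" using step_go(2)[OF False] T_def by simp
  have "is_part V (comps (step s st))" unfolding cp using merge_part[OF finV] .
  moreover have "load V E (yv (step s st)) e < c e" if e: "e \<in> E" "crossing (comps (step s st)) e" for e
  proof -
    have cr: "crossing (comps st) e" using cross_refines[OF refines_merge[OF P] e(2)[unfolded cp]] .
    have "e \<notin> T" using tight_not_cross[of e T] e Ecard EV cp by auto
    then have ne: "load V E (yv (step s st)) e \<noteq> c e" using e(1) cr step_go(3)[OF False]
      unfolding T_def tight_edges_def by auto
    have ld: "load V E (yv (step s st)) e = load V E (yv st) e + Dl s st * real (rate s (time st) (comps st) e)"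
      using load_step[OF assms False e(1) cr] .
    have lt: "load V E (yv st) e < c e" using assms e(1) cr unfolding Wf_def by auto
    have "load V E (yv (step s st)) e \<le> c e"
    proof (cases "rate s (time st) (comps st) e > 0")
      case True
      have "Dl s st \<le> (c e - load V E (yv st) e) / real (rate s (time st) (comps st) e)"
        using Dl_le_ET[OF assms False e(1) cr True] .
      then have "Dl s st * real (rate s (time st) (comps st) e) \<le> c e - load V E (yv st) e"
        using True by (simp add: pos_le_divide_eq)
      then show ?thesis using ld by linarith
    next
      case False then show ?thesis using ld lt by simp
    qed
    then show ?thesis using ne by linarith
  qed
  ultimately show ?thesis unfolding Wf_def by auto
qed

lemma Wf_init: "Wf (mg_init V E c)"
proof -
  define P0 where "P0 = (\<lambda>v. {v}) ` V"
  have cp: "comps (mg_init V E c) = merge V P0 (tight_edges V E c P0 (\<lambda>_. 0))"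
    and yv: "yv (mg_init V E c) = (\<lambda>_. 0)" unfolding mg_init_def P0_def Let_def by simp_all
  have l0: "load V E (\<lambda>_. 0) e = 0" for e unfolding load_def by simp
  have P0: "is_part V P0" unfolding P0_def is_part_def by auto
  have "load V E (yv (mg_init V E c)) e < c e" if e: "e \<in> E" "crossing (comps (mg_init V E c)) e" for e
  proof -
    have cr: "crossing P0 e" using cross_refines[OF refines_merge[OF P0] e(2)[unfolded cp]] .
    have "e \<notin> tight_edges V E c P0 (\<lambda>_. 0)" using tight_not_cross e Ecard EV cp by metis
    then have "c e \<noteq> 0" using e(1) cr l0 unfolding tight_edges_def by auto
    then show ?thesis using cpos[OF e(1)] yv l0 by simp
  qed
  moreover have "is_part V (comps (mg_init V E c))" unfolding cp using merge_part[OF finV] .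
  ultimately show ?thesis unfolding Wf_def by auto
qed

end


context mg begin

definition run :: "('v \<Rightarrow> real) \<Rightarrow> nat \<Rightarrow> 'v mstate" where
  "run s m = (step s ^^ m) (mg_init V E c)"

lemma run_0: "run s 0 = mg_init V E c" unfolding run_def by simp
lemma run_Suc: "run s (Suc m) = step s (run s m)" unfolding run_def by simp

lemma Wf_run: "Wf (run s m)"
  by (induction m) (auto simp: run_0 run_Suc Wf_init Wf_step)

lemma run_stop: "Aset s (run s n) = {} \<Longrightarrow> run s (n + k) = run s n"
  by (induction k) (auto simp: run_Suc step_stop)

lemma time_mono_step: "Wf st \<Longrightarrow> time st \<le> time (step s st)"
proof (cases "Aset s st = {}")
  case True then show ?thesis using step_stop by simp
next
  case False
  assume "Wf st"
  then show ?thesis using Dl_pos[OF \<open>Wf st\<close> False] step_go(1)[OF False] by simp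
qed

definition Phi :: "('v \<Rightarrow> real) \<Rightarrow> 'v mstate \<Rightarrow> nat" where
  "Phi s st = card (comps st) + card (Aset s st)"

lemma active_new_le:
  assumes W: "Wf st" and ne: "Aset s st \<noteq> {}"
  shows "card (Aset s (step s st)) \<le> card {C\<in>Aset s st. is_active s (time st + Dl s st) C}"
proof -
  define P where "P = comps st"
  define Q where "Q = comps (step s st)"
  define \<tau>' where "\<tau>' = time st + Dl s st"
  define Tg where "Tg = {C\<in>Aset s st. is_active s \<tau>' C}"
  have P: "is_part V P" using W unfolding Wf_def P_def by auto
  have Q: "is_part V Q" using Wf_step[OF W] unfolding Wf_def Q_def by auto
  have PQ: "refines P Q" unfolding P_def Q_def step_go(2)[OF ne] using refines_merge[OF P[unfolded P_def]] .
  have tq: "time (step s st) = \<tau>'" unfolding \<tau>'_def using step_go(1)[OF ne] .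
  have dpos: "Dl s st > 0" using Dl_pos[OF W ne] .
  have ex: "\<exists>C. C \<in> Tg \<and> C \<subseteq> D" if D: "D \<in> Aset s (step s st)" for D
  proof -
    have DQ: "D \<in> Q" using D unfolding Aset_def Q_def by auto
    obtain w where w: "w \<in> D" "s w > \<tau>'" using D tq unfolding Aset_def is_active_def by auto
    have wV: "w \<in> V" using Q DQ w(1) unfolding is_part_def by auto
    obtain C where C: "C \<in> P" "w \<in> C" using part_block[OF P wV] by auto
    obtain D' where D': "D' \<in> Q" "C \<subseteq> D'" using PQ C(1) unfolding refines_def by auto
    have "D' = D" using part_uniq[OF Q D'(1) DQ] D'(2) C(2) w(1) by auto
    moreover have "is_active s \<tau>' C" using C(2) w(2) unfolding is_active_def by auto
    moreover have "is_active s (time st) C" using C(2) w(2) dpos unfolding is_active_def \<tau>'_def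
      by (intro bexI[of _ w]) auto
    ultimately show ?thesis using C D'(2) unfolding Tg_def Aset_def P_def by auto
  qed
  define G where "G D = (SOME C. C \<in> Tg \<and> C \<subseteq> D)" for D
  have G: "G D \<in> Tg \<and> G D \<subseteq> D" if "D \<in> Aset s (step s st)" for D
    unfolding G_def using someI_ex[OF ex[OF that]] .
  have "inj_on G (Aset s (step s st))"
  proof (rule inj_onI)
    fix D1 D2 assume D: "D1 \<in> Aset s (step s st)" "D2 \<in> Aset s (step s st)" "G D1 = G D2"
    have "G D1 \<in> P" using G[OF D(1)] unfolding Tg_def Aset_def P_def by auto
    then have "G D1 \<noteq> {}" using P unfolding is_part_def by auto
    then obtain x where "x \<in> G D1" by auto
    then have "x \<in> D1" "x \<in> D2" using G[OF D(1)] G[OF D(2)] D(3) by auto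
    moreover have "D1 \<in> Q" "D2 \<in> Q" using D unfolding Aset_def Q_def by auto
    ultimately show "D1 = D2" using part_uniq[OF Q] by auto
  qed
  moreover have "G ` Aset s (step s st) \<subseteq> Tg" using G by auto
  moreover have "finite Tg"
  proof -
    have "Tg \<subseteq> P" unfolding Tg_def Aset_def P_def by auto
    then show ?thesis using part_finite[OF finV P] finite_subset by auto
  qed
  ultimately show ?thesis unfolding Tg_def \<tau>'_def using card_inj_on_le by blast
qed

lemma Phi_dec:
  assumes W: "Wf st" and ne: "Aset s st \<noteq> {}"
  shows "Phi s (step s st) < Phi s st"
proof -
  define P where "P = comps st"
  define T where "T = tight_edges V E c P (ynew s st)"
  define \<tau>' where "\<tau>' = time st + Dl s st"
  have P: "is_part V P" using W unfolding Wf_def P_def by auto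
  have cp: "comps (step s st) = merge V P T" unfolding P_def T_def using step_go(2)[OF ne] .
  have finA: "finite (Aset s st)" using part_finite[OF finV P] Aset_sub[of s st] finite_subset
    unfolding P_def by auto
  have a1: "card (Aset s (step s st)) \<le> card {C\<in>Aset s st. is_active s \<tau>' C}"
    using active_new_le[OF W ne] unfolding \<tau>'_def .
  have a2: "card {C\<in>Aset s st. is_active s \<tau>' C} \<le> card (Aset s st)"
    using finA by (intro card_mono) auto
  have m1: "card (merge V P T) \<le> card P" using merge_card(1)[OF finV P] .
  from Dl_facts(1)[OF W ne] show ?thesis
  proof
    assume "Dl s st \<in> ETs s st"
    then obtain e where e: "e \<in> E" "crossing P e" "rate s (time st) P e > 0"
      and x: "Dl s st = (c e - load V E (yv st) e) / real (rate s (time st) P e)"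
      unfolding ETs_def P_def by auto
    have "load V E (yv (step s st)) e = load V E (yv st) e + Dl s st * real (rate s (time st) P e)"
      using load_step[OF W ne e(1) e(2)[unfolded P_def]] unfolding P_def .
    also have "\<dots> = c e" using x e(3) by simp
    finally have "e \<in> T" using e(1,2) step_go(3)[OF ne] unfolding T_def tight_edges_def by auto
    then have "card (merge V P T) < card P" using merge_card(2)[OF finV P] e Ecard EV by auto
    then show ?thesis unfolding Phi_def cp P_def using a1 a2 by linarith
  next
    assume "Dl s st \<in> DTs s st"
    then obtain C0 where C0: "C0 \<in> Aset s st" "Dl s st = Max (s ` C0) - time st" unfolding DTs_def by auto
    have "\<not> is_active s \<tau>' C0"
    proof
      assume "is_active s \<tau>' C0"
      then obtain w where w: "w \<in> C0" "s w > \<tau>'" unfolding is_active_def by auto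
      have "s w \<le> Max (s ` C0)" using Aset_mem(2)[OF W C0(1)] w(1) by (intro Max_ge) auto
      then show False using w(2) C0(2) unfolding \<tau>'_def by linarith
    qed
    then have "{C\<in>Aset s st. is_active s \<tau>' C} \<subset> Aset s st" using C0(1) by auto
    then have "card {C\<in>Aset s st. is_active s \<tau>' C} < card (Aset s st)" using finA psubset_card_mono by auto
    then show ?thesis unfolding Phi_def cp P_def using a1 m1 unfolding P_def by linarith
  qed
qed

lemma Phi_init: "Phi s st \<le> 2 * card V" if "Wf st"
proof -
  have P: "is_part V (comps st)" using that unfolding Wf_def by auto
  have "card (Aset s st) \<le> card (comps st)"
    using part_finite[OF finV P] Aset_sub by (intro card_mono) auto
  then show ?thesis using part_card[OF finV P] unfolding Phi_def by linarith
qed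

lemma run_term_aux: "Aset s (run s m) = {} \<or> Phi s (run s m) + m \<le> 2 * card V"
proof (induction m)
  case 0 then show ?case using Phi_init[OF Wf_run[of s 0]] by simp
next
  case (Suc m)
  show ?case
  proof (cases "Aset s (run s m) = {}")
    case True then show ?thesis using step_stop run_Suc by simp
  next
    case False
    then have "Phi s (run s (Suc m)) < Phi s (run s m)" unfolding run_Suc using Phi_dec[OF Wf_run False] by simp
    then show ?thesis using Suc False by simp
  qed
qed

lemma run_term: "m \<ge> 2 * card V + 1 \<Longrightarrow> Aset s (run s m) = {}"
proof -
  assume m: "m \<ge> 2 * card V + 1"
  define n where "n = 2 * card V + 1"
  have stop: "Aset s (run s n) = {}" using run_term_aux[of s n] unfolding n_def by auto
  have "run s m = run s n" using run_stop[OF stop, of "m - n"] m unfolding n_def by simp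
  then show ?thesis using stop by simp
qed

end


context mg begin

definition ext_load :: "('v \<Rightarrow> real) \<Rightarrow> 'v mstate \<Rightarrow> real \<Rightarrow> 'v set \<Rightarrow> real" where
  "ext_load s st T e = load V E (yv st) e + (T - time st) * real (rate s (time st) (comps st) e)"

definition bt :: "real \<Rightarrow> real \<Rightarrow> 'v set \<Rightarrow> real" where
  "bt \<tau> T C = max 0 (min T (Max (t ` C)) - \<tau>)"

definition ext_base :: "'v mstate \<Rightarrow> real \<Rightarrow> real" where
  "ext_base st T = ybase st + (\<Sum>C\<in>comps st. bt (time st) T C)"

lemma ext_base_self: "ext_base st (time st) = ybase st"
proof -
  have "bt (time st) (time st) C = 0" for C unfolding bt_def by (simp add: max_def min_def)
  then show ?thesis unfolding ext_base_def by simp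
qed

lemma ext_base_incr:
  assumes "time st \<le> T" "T \<le> T2"
  shows "ext_base st T2 = ext_base st T + (\<Sum>C\<in>comps st. bt T T2 C)"
proof -
  have "bt (time st) T2 C = bt (time st) T C + bt T T2 C" for C
    using assms unfolding bt_def by (simp add: max_def min_def)
  then show ?thesis unfolding ext_base_def by (simp add: sum.distrib)
qed

lemma bt_nonneg: "bt \<tau> T C \<ge> 0" unfolding bt_def by simp

lemma ext_base_mono:
  assumes "time st \<le> T" "T \<le> T2"
  shows "ext_base st T \<le> ext_base st T2"
  using ext_base_incr[OF assms] bt_nonneg sum_nonneg[of "comps st" "bt T T2"] by simp

lemma Mt_le:
  assumes tle: "\<forall>v\<in>V. t v \<le> s v" and C: "finite C" "C \<noteq> {}" "C \<subseteq> V"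
  shows "Max (t ` C) \<le> Max (s ` C)"
proof -
  have "Max (t ` C) \<in> t ` C" using C by (intro Max_in) auto
  then obtain w where w: "w \<in> C" "Max (t ` C) = t w" by auto
  have "s w \<le> Max (s ` C)" using C w by (intro Max_ge) auto
  moreover have "t w \<le> s w" using tle w(1) C(3) by auto
  ultimately show ?thesis using w(2) by linarith
qed

lemma inactive_bt:
  assumes tle: "\<forall>v\<in>V. t v \<le> s v" and W: "Wf st" and C: "C \<in> comps st" "\<not> is_active s (time st) C"
  shows "bt (time st) T C = 0"
proof -
  have P: "is_part V (comps st)" using W unfolding Wf_def by auto
  have fC: "finite C" using part_block_finite[OF finV P C(1)] .
  have ne: "C \<noteq> {}" "C \<subseteq> V" using P C(1) unfolding is_part_def by auto
  have "Max (s ` C) \<le> time st"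
  proof -
    have "Max (s ` C) \<in> s ` C" using fC ne by (intro Max_in) auto
    then show ?thesis using C(2) unfolding is_active_def by (auto simp: not_less)
  qed
  then have "Max (t ` C) \<le> time st" using Mt_le[OF tle fC ne] by linarith
  then show ?thesis unfolding bt_def by (simp add: max_def min_def)
qed

lemma ext_base_stop:
  assumes tle: "\<forall>v\<in>V. t v \<le> s v" and W: "Wf st" and A: "Aset s st = {}"
  shows "ext_base st T = ybase st"
proof -
  have "bt (time st) T C = 0" if "C \<in> comps st" for C
    using inactive_bt[OF tle W that] A that unfolding Aset_def by auto
  then show ?thesis unfolding ext_base_def by simp
qed

lemma ext_base_step:
  assumes tle: "\<forall>v\<in>V. t v \<le> s v" and W: "Wf st" and A: "Aset s st \<noteq> {}"
  shows "ybase (step s st) = ext_base st (time (step s st))"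
proof -
  have fin: "finite (comps st)" using W part_finite[OF finV] unfolding Wf_def by auto
  have dpos: "Dl s st > 0" using Dl_pos[OF W A] .
  have tq: "time (step s st) = time st + Dl s st" using step_go(1)[OF A] .
  have eq1: "min (Dl s st) (max 0 (Max (t ` C) - time st)) = bt (time st) (time (step s st)) C" for C
    unfolding tq bt_def using dpos by (simp add: max_def min_def)
  have "(\<Sum>C\<in>comps st. bt (time st) (time (step s st)) C) = (\<Sum>C\<in>Aset s st. bt (time st) (time (step s st)) C)"
  proof (rule sum.mono_neutral_right[OF fin Aset_sub])
    show "\<forall>C\<in>comps st - Aset s st. bt (time st) (time (step s st)) C = 0"
      using inactive_bt[OF tle W] unfolding Aset_def by auto
  qed
  then show ?thesis unfolding ext_base_def step_go(4)[OF A] eq1 by simp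
qed

lemma ybase_mono:
  assumes W: "Wf st"
  shows "ybase st \<le> ybase (step s st)"
proof (cases "Aset s st = {}")
  case True then show ?thesis using step_stop by simp
next
  case False
  have "0 \<le> (\<Sum>C\<in>Aset s st. min (Dl s st) (max 0 (Max (t ` C) - time st)))"
    using Dl_pos[OF W False] by (intro sum_nonneg) simp
  then show ?thesis using step_go(4)[OF False] by simp
qed

lemma ext_load_self: "ext_load s st (time st) e = load V E (yv st) e"
  unfolding ext_load_def by simp

lemma ext_load_step:
  assumes W: "Wf st" and A: "Aset s st \<noteq> {}" and e: "e \<in> E" "crossing (comps st) e"
  shows "load V E (yv (step s st)) e = ext_load s st (time (step s st)) e"
  unfolding ext_load_def using load_step[OF W A e] step_go(1)[OF A] by simp

lemma ext_load_incr:
  "ext_load s st T2 e = ext_load s st T e + (T2 - T) * real (rate s (time st) (comps st) e)"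
  unfolding ext_load_def by (simp add: algebra_simps)

lemma rate_stop: assumes "Aset s st = {}" shows "rate s (time st) (comps st) e = 0"
proof -
  have "{C \<in> comps st. is_active s (time st) C \<and> e \<inter> C \<noteq> {}} = {}" using assms unfolding Aset_def by auto
  then show ?thesis unfolding rate_def by (metis card.empty)
qed

lemma load_lt_next:
  assumes W: "Wf st" and e: "e \<in> E" "crossing (comps st) e" and T: "time st \<le> T"
    and nx: "Aset s st = {} \<or> T < time (step s st)"
  shows "ext_load s st T e < c e"
proof -
  have lt: "load V E (yv st) e < c e" using W e unfolding Wf_def by auto
  show ?thesis
  proof (cases "rate s (time st) (comps st) e > 0")
    case False then show ?thesis using lt unfolding ext_load_def by simp
  next
    case True
    then have A: "Aset s st \<noteq> {}" using rate_stop by fastforce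
    then have Tl: "T < time st + Dl s st" using nx step_go(1)[OF A] by auto
    have "Dl s st \<le> (c e - load V E (yv st) e) / real (rate s (time st) (comps st) e)"
      using Dl_le_ET[OF W A e True] .
    then have "Dl s st * real (rate s (time st) (comps st) e) \<le> c e - load V E (yv st) e"
      using True by (simp add: pos_le_divide_eq)
    moreover have "(T - time st) * real (rate s (time st) (comps st) e) < Dl s st * real (rate s (time st) (comps st) e)"
      using Tl True by (intro mult_strict_right_mono) auto
    ultimately show ?thesis unfolding ext_load_def by linarith
  qed
qed

end


context mg begin

lemma base_compare:
  assumes P: "is_part V P" and Q: "is_part V Q" and PQ: "refines P Q"
  shows "(\<Sum>D\<in>Q. bt T T2 D) \<le> (\<Sum>C\<in>P. bt T T2 C)"
proof -
  have ex: "\<exists>C. C \<in> P \<and> C \<subseteq> D \<and> C \<noteq> {} \<and> bt T T2 D \<le> bt T T2 C" if D: "D \<in> Q" for D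
  proof -
    have fD: "finite D" using part_block_finite[OF finV Q D] .
    have neD: "D \<noteq> {}" "D \<subseteq> V" using Q D unfolding is_part_def by auto
    have "Max (t ` D) \<in> t ` D" using fD neD by (intro Max_in) auto
    then obtain w where w: "w \<in> D" "Max (t ` D) = t w" by auto
    have wV: "w \<in> V" using w neD by auto
    obtain C where C: "C \<in> P" "w \<in> C" using part_block[OF P wV] by auto
    obtain D' where D': "D' \<in> Q" "C \<subseteq> D'" using PQ C unfolding refines_def by auto
    have "D' = D" using part_uniq[OF Q D'(1) D] D'(2) C(2) w(1) by auto
    moreover have "t w \<le> Max (t ` C)" using part_block_finite[OF finV P C(1)] C(2) by (intro Max_ge) auto
    then have "bt T T2 D \<le> bt T T2 C" unfolding bt_def w(2) by (simp add: max_def min_def)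
    ultimately show ?thesis using C D' by auto
  qed
  define G where "G D = (SOME C. C \<in> P \<and> C \<subseteq> D \<and> C \<noteq> {} \<and> bt T T2 D \<le> bt T T2 C)" for D
  have G: "G D \<in> P \<and> G D \<subseteq> D \<and> G D \<noteq> {} \<and> bt T T2 D \<le> bt T T2 (G D)" if "D \<in> Q" for D
    unfolding G_def using someI_ex[OF ex[OF that]] .
  have inj: "inj_on G Q"
  proof (rule inj_onI)
    fix D1 D2 assume D: "D1 \<in> Q" "D2 \<in> Q" "G D1 = G D2"
    obtain x where "x \<in> G D1" using G[OF D(1)] by auto
    then have "x \<in> D1" "x \<in> D2" using G[OF D(1)] G[OF D(2)] D(3) by auto
    then show "D1 = D2" using part_uniq[OF Q D(1) D(2)] by auto
  qed
  have "(\<Sum>D\<in>Q. bt T T2 D) \<le> (\<Sum>D\<in>Q. bt T T2 (G D))" using G by (intro sum_mono) auto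
  also have "\<dots> = (\<Sum>C\<in>G ` Q. bt T T2 C)" using sum.reindex[OF inj, of "bt T T2"] by simp
  also have "\<dots> \<le> (\<Sum>C\<in>P. bt T T2 C)"
    using G part_finite[OF finV P] bt_nonneg by (intro sum_mono2) auto
  finally show ?thesis .
qed

lemma rate_compare:
  assumes P: "is_part V P" and Q: "is_part V Q" and PQ: "refines P Q"
    and e: "e \<in> E" "crossing Q e"
    and act: "\<forall>C\<in>P. is_active s ta C \<longrightarrow> is_active s' tb C"
  shows "rate s ta P e \<le> rate s' tb Q e"
proof -
  define S1 where "S1 = {C\<in>P. is_active s ta C \<and> e \<inter> C \<noteq> {}}"
  define S2 where "S2 = {D\<in>Q. is_active s' tb D \<and> e \<inter> D \<noteq> {}}"
  define G where "G C = (SOME D. D \<in> Q \<and> C \<subseteq> D)" for C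
  have G: "G C \<in> Q \<and> C \<subseteq> G C" if "C \<in> P" for C
    unfolding G_def using PQ that unfolding refines_def by (metis (mono_tags, lifting) someI_ex)
  obtain a b where ab: "e = {a,b}" "a \<noteq> b" using edge2[OF Ecard[OF e(1)]] by blast
  have inj: "inj_on G S1"
  proof (rule inj_onI)
    fix C1 C2 assume C: "C1 \<in> S1" "C2 \<in> S1" "G C1 = G C2"
    have CP: "C1 \<in> P" "C2 \<in> P" using C unfolding S1_def by auto
    have i1: "a \<in> C1 \<or> b \<in> C1" and i2: "a \<in> C2 \<or> b \<in> C2" using C ab unfolding S1_def by auto
    have nsub: "\<not> e \<subseteq> G C1" using e(2) G[OF CP(1)] unfolding crossing_def by auto
    show "C1 = C2"
    proof (cases "a \<in> C1")
      case True
      then have "b \<notin> C2 \<or> a \<in> C2" using nsub G[OF CP(1)] G[OF CP(2)] C(3) ab by auto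
      then have "a \<in> C2" using i2 by auto
      then show ?thesis using part_uniq[OF P CP] True by auto
    next
      case False
      then have b1: "b \<in> C1" using i1 by auto
      then have "a \<notin> C2 \<or> b \<in> C2" using nsub G[OF CP(1)] G[OF CP(2)] C(3) ab by auto
      then have "b \<in> C2" using i2 by auto
      then show ?thesis using part_uniq[OF P CP] b1 by auto
    qed
  qed
  have img: "G ` S1 \<subseteq> S2"
  proof
    fix D assume "D \<in> G ` S1"
    then obtain C where C: "C \<in> S1" "D = G C" by auto
    have CP: "C \<in> P" using C unfolding S1_def by auto
    have "is_active s' tb C" using act CP C(1) unfolding S1_def by auto
    then have "is_active s' tb D" using G[OF CP] C(2) unfolding is_active_def by auto
    moreover have "e \<inter> D \<noteq> {}" using C(1) G[OF CP] C(2) unfolding S1_def by auto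
    ultimately show "D \<in> S2" using G[OF CP] C(2) unfolding S2_def by auto
  qed
  have "finite S2" using part_finite[OF finV Q] unfolding S2_def by auto
  then have "card S1 \<le> card S2" using card_inj_on_le[OF inj img] by auto
  then show ?thesis unfolding rate_def S1_def S2_def .
qed

lemma active_transfer:
  assumes W: "Wf a" and sle: "\<forall>v\<in>V. s v \<le> s' v" and A: "Aset s a \<noteq> {}"
    and tb: "tb < T2" "T2 \<le> time (step s a)"
    and C: "C \<in> comps a" "is_active s (time a) C"
  shows "is_active s' tb C"
proof -
  have CA: "C \<in> Aset s a" using C unfolding Aset_def by auto
  have "time a + Dl s a \<le> Max (s ` C)" using Dl_le_DT[OF W CA] .
  then have M: "tb < Max (s ` C)" using tb step_go(1)[OF A] by linarith
  have "Max (s ` C) \<in> s ` C" using Aset_mem(2,3)[OF W CA] by (intro Max_in) auto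
  then obtain w where w: "w \<in> C" "s w = Max (s ` C)" by auto
  have "w \<in> V" using Aset_mem(4)[OF W CA] w by auto
  then have "s' w > tb" using sle w M by force
  then show ?thesis using w unfolding is_active_def by auto
qed

lemma ext_mono:
  assumes Wa: "Wf a" and Wb: "Wf b" and ref: "refines (comps a) (comps b)"
    and e: "e \<in> E" "crossing (comps b) e" and sle: "\<forall>v\<in>V. s v \<le> s' v"
    and tT: "time b \<le> T" "T \<le> T2"
    and nx: "Aset s a = {} \<or> T2 \<le> time (step s a)"
    and le: "ext_load s a T e \<le> ext_load s' b T e"
  shows "ext_load s a T2 e \<le> ext_load s' b T2 e"
proof (cases "T = T2")
  case True then show ?thesis using le by simp
next
  case False
  then have lt: "T < T2" using tT by auto
  have r: "rate s (time a) (comps a) e \<le> rate s' (time b) (comps b) e"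
  proof (cases "Aset s a = {}")
    case True then show ?thesis using rate_stop by simp
  next
    case False
    have Pa: "is_part V (comps a)" and Pb: "is_part V (comps b)" using Wa Wb unfolding Wf_def by auto
    show ?thesis
    proof (rule rate_compare[OF Pa Pb ref e])
      show "\<forall>C\<in>comps a. is_active s (time a) C \<longrightarrow> is_active s' (time b) C"
        using active_transfer[OF Wa sle False, of "time b" T2] tT lt nx False by auto
    qed
  qed
  have "(T2 - T) * real (rate s (time a) (comps a) e) \<le> (T2 - T) * real (rate s' (time b) (comps b) e)"
    using r lt by (intro mult_left_mono) auto
  then show ?thesis using le ext_load_incr[of s a T2 e T] ext_load_incr[of s' b T2 e T] by linarith
qed

definition Rel :: "('v \<Rightarrow> real) \<Rightarrow> ('v \<Rightarrow> real) \<Rightarrow> 'v mstate \<Rightarrow> 'v mstate \<Rightarrow> bool" where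
  "Rel s s' a b \<longleftrightarrow> (Aset s a = {} \<or> max (time a) (time b) \<le> time (step s a))
     \<and> (Aset s' b = {} \<or> max (time a) (time b) \<le> time (step s' b))
     \<and> refines (comps a) (comps b)
     \<and> (\<forall>e\<in>E. crossing (comps b) e \<longrightarrow> ext_load s a (max (time a) (time b)) e \<le> ext_load s' b (max (time a) (time b)) e)
     \<and> ext_base b (max (time a) (time b)) \<le> ext_base a (max (time a) (time b))"

lemma Rel_init: "Rel s s' (mg_init V E c) (mg_init V E c)"
  unfolding Rel_def using time_mono_step[OF Wf_init] refines_refl by (auto simp: ext_load_def)

lemma trans_A:
  assumes Wa: "Wf a" and Wb: "Wf b" and R: "Rel s s' a b"
    and tle: "\<forall>v\<in>V. t v \<le> s v" and tle': "\<forall>v\<in>V. t v \<le> s' v" and sle: "\<forall>v\<in>V. s v \<le> s' v"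
    and Ab: "Aset s' b \<noteq> {}" and nx: "Aset s a = {} \<or> time (step s' b) \<le> time (step s a)"
  shows "Rel s s' a (step s' b)"
proof -
  define T where "T = max (time a) (time b)"
  define b' where "b' = step s' b"
  define T2 where "T2 = time b'"
  have Wb': "Wf b'" unfolding b'_def using Wf_step[OF Wb] .
  have TT2: "T \<le> T2" using R Ab unfolding Rel_def T_def T2_def b'_def by auto
  have tbT: "time b \<le> T" "time a \<le> T" unfolding T_def by auto
  have mx: "max (time a) (time b') = T2" using TT2 tbT unfolding T2_def by auto
  have Pa: "is_part V (comps a)" and Pb: "is_part V (comps b)" and Pb': "is_part V (comps b')"
    using Wa Wb Wb' unfolding Wf_def by auto
  have refb: "refines (comps b) (comps b')"
    unfolding b'_def step_go(2)[OF Ab] using refines_merge[OF Pb] .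
  have ref: "refines (comps a) (comps b')" using R refb refines_trans unfolding Rel_def by blast
  have c1: "Aset s a = {} \<or> T2 \<le> time (step s a)" using nx unfolding T2_def b'_def by auto
  have c2: "Aset s' b' = {} \<or> T2 \<le> time (step s' b')" using time_mono_step[OF Wb'] unfolding T2_def by auto
  have loads: "ext_load s a T2 e \<le> ext_load s' b' T2 e" if e: "e \<in> E" "crossing (comps b') e" for e
  proof -
    have crb: "crossing (comps b) e" using cross_refines[OF refb e(2)] .
    have "ext_load s' b' T2 e = ext_load s' b T2 e"
      unfolding T2_def ext_load_self b'_def using ext_load_step[OF Wb Ab e(1) crb] .
    moreover have "ext_load s a T2 e \<le> ext_load s' b T2 e"
    proof (rule ext_mono[OF Wa Wb _ e(1) crb sle tbT(1) TT2 c1])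
      show "refines (comps a) (comps b)" using R unfolding Rel_def by auto
      show "ext_load s a T e \<le> ext_load s' b T e" using R e(1) crb unfolding Rel_def T_def by auto
    qed
    ultimately show ?thesis by simp
  qed
  have base: "ext_base b' T2 \<le> ext_base a T2"
  proof -
    have "ext_base b' T2 = ybase b'" unfolding T2_def ext_base_self ..
    also have "\<dots> = ext_base b T2" unfolding b'_def T2_def using ext_base_step[OF tle' Wb Ab] .
    also have "\<dots> = ext_base b T + (\<Sum>C\<in>comps b. bt T T2 C)" using ext_base_incr[OF tbT(1) TT2] .
    also have "\<dots> \<le> ext_base a T + (\<Sum>C\<in>comps a. bt T T2 C)"
      using R base_compare[OF Pa Pb, of T T2] unfolding Rel_def T_def by auto
    also have "\<dots> = ext_base a T2" using ext_base_incr[OF tbT(2) TT2] by simp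
    finally show ?thesis .
  qed
  show ?thesis unfolding Rel_def b'_def[symmetric] mx using c1 c2 ref loads base by auto
qed

lemma trans_B:
  assumes Wa: "Wf a" and Wb: "Wf b" and R: "Rel s s' a b"
    and tle: "\<forall>v\<in>V. t v \<le> s v" and tle': "\<forall>v\<in>V. t v \<le> s' v" and sle: "\<forall>v\<in>V. s v \<le> s' v"
    and Aa: "Aset s a \<noteq> {}" and nx: "Aset s' b = {} \<or> time (step s a) < time (step s' b)"
  shows "Rel s s' (step s a) b"
proof -
  define T where "T = max (time a) (time b)"
  define a' where "a' = step s a"
  define T2 where "T2 = time a'"
  have Wa': "Wf a'" unfolding a'_def using Wf_step[OF Wa] .
  have TT2: "T \<le> T2" using R Aa unfolding Rel_def T_def T2_def a'_def by auto
  have tbT: "time b \<le> T" "time a \<le> T" unfolding T_def by auto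
  have mx: "max (time a') (time b) = T2" using TT2 tbT unfolding T2_def by auto
  have Pa: "is_part V (comps a)" and Pb: "is_part V (comps b)" and Pa': "is_part V (comps a')"
    using Wa Wb Wa' unfolding Wf_def by auto
  have refa: "refines (comps a) (comps b)" using R unfolding Rel_def by auto
  have c1: "Aset s a = {} \<or> T2 \<le> time (step s a)" unfolding T2_def a'_def by auto
  have c1': "Aset s a' = {} \<or> T2 \<le> time (step s a')" using time_mono_step[OF Wa'] unfolding T2_def by auto
  have c2: "Aset s' b = {} \<or> T2 < time (step s' b)" using nx unfolding T2_def a'_def by auto
  have c2': "Aset s' b = {} \<or> T2 \<le> time (step s' b)" using c2 by auto
  have mono: "ext_load s a T2 e \<le> ext_load s' b T2 e" if e: "e \<in> E" "crossing (comps b) e" for e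
  proof (rule ext_mono[OF Wa Wb refa e sle tbT(1) TT2 c1])
    show "ext_load s a T e \<le> ext_load s' b T e" using R e unfolding Rel_def T_def by auto
  qed
  have ldeq: "ext_load s a' T2 e = ext_load s a T2 e" if e: "e \<in> E" "crossing (comps a) e" for e
    unfolding T2_def ext_load_self a'_def using ext_load_step[OF Wa Aa e] .
  have ref: "refines (comps a') (comps b)"
  proof -
    define Tt where "Tt = tight_edges V E c (comps a) (ynew s a)"
    have cp: "comps a' = merge V (comps a) Tt" unfolding a'_def Tt_def using step_go(2)[OF Aa] .
    have "\<exists>D\<in>comps b. e \<subseteq> D" if e: "e \<in> Tt" for e
    proof (rule ccontr)
      assume "\<not> (\<exists>D\<in>comps b. e \<subseteq> D)"
      then have crb: "crossing (comps b) e" unfolding crossing_def by auto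
      have eE: "e \<in> E" and cra: "crossing (comps a) e" and lc: "load V E (ynew s a) e = c e"
        using e unfolding Tt_def tight_edges_def by auto
      have "c e = ext_load s a T2 e"
        using lc ext_load_step[OF Wa Aa eE cra] step_go(3)[OF Aa] unfolding T2_def a'_def by simp
      also have "\<dots> \<le> ext_load s' b T2 e" using mono[OF eE crb] .
      also have "\<dots> < c e" using load_lt_next[OF Wb eE crb _ c2] tbT TT2 by linarith
      finally show False by simp
    qed
    then show ?thesis unfolding cp using merge_refines[OF refa Pb Pa] by auto
  qed
  have loads: "ext_load s a' T2 e \<le> ext_load s' b T2 e" if e: "e \<in> E" "crossing (comps b) e" for e
    using ldeq[OF e(1) cross_refines[OF refa e(2)]] mono[OF e] by simp
  have base: "ext_base b T2 \<le> ext_base a' T2"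
  proof -
    have "ext_base b T2 = ext_base b T + (\<Sum>C\<in>comps b. bt T T2 C)" using ext_base_incr[OF tbT(1) TT2] .
    also have "\<dots> \<le> ext_base a T + (\<Sum>C\<in>comps a. bt T T2 C)"
      using R base_compare[OF Pa Pb refa, of T T2] unfolding Rel_def T_def by auto
    also have "\<dots> = ext_base a T2" using ext_base_incr[OF tbT(2) TT2] by simp
    also have "\<dots> = ybase a'" unfolding a'_def T2_def using ext_base_step[OF tle Wa Aa] by simp
    also have "\<dots> = ext_base a' T2" unfolding T2_def ext_base_self ..
    finally show ?thesis .
  qed
  show ?thesis unfolding Rel_def a'_def[symmetric] mx using c1' c2' ref loads base by auto
qed

lemma ybase_run_mono: "m \<le> n \<Longrightarrow> ybase (run s m) \<le> ybase (run s n)"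
proof (induction n rule: dec_induct)
  case base then show ?case by simp
next
  case (step n) then show ?case using ybase_mono[OF Wf_run, of s n s] run_Suc[of s n] by simp
qed

context
  fixes s s' :: "'v \<Rightarrow> real"
  assumes tle: "\<forall>v\<in>V. t v \<le> s v" and tle': "\<forall>v\<in>V. t v \<le> s' v" and sle: "\<forall>v\<in>V. s v \<le> s' v"
begin

lemma inner:
  assumes Ab: "Aset s' (run s' j) \<noteq> {}"
  shows "\<forall>k. 2 * card V + 1 - k \<le> n \<longrightarrow> Rel s s' (run s k) (run s' j) \<longrightarrow>
    (\<exists>k'. Rel s s' (run s k') (run s' j) \<and> (Aset s (run s k') = {} \<or> time (run s' (Suc j)) \<le> time (run s (Suc k'))))"
proof (induction n)
  case 0
  show ?case
  proof (intro allI impI)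
    fix k assume k: "2 * card V + 1 - k \<le> 0" and R: "Rel s s' (run s k) (run s' j)"
    have "Aset s (run s k) = {}" using run_term k by auto
    then show "\<exists>k'. Rel s s' (run s k') (run s' j) \<and> (Aset s (run s k') = {} \<or> time (run s' (Suc j)) \<le> time (run s (Suc k')))"
      using R by blast
  qed
next
  case (Suc n)
  show ?case
  proof (intro allI impI)
    fix k assume k: "2 * card V + 1 - k \<le> Suc n" and R: "Rel s s' (run s k) (run s' j)"
    show "\<exists>k'. Rel s s' (run s k') (run s' j) \<and> (Aset s (run s k') = {} \<or> time (run s' (Suc j)) \<le> time (run s (Suc k')))"
    proof (cases "Aset s (run s k) = {} \<or> time (run s' (Suc j)) \<le> time (run s (Suc k))")
      case True then show ?thesis using R by blast
    next
      case False
      then have Aa: "Aset s (run s k) \<noteq> {}" and lt: "time (run s (Suc k)) < time (run s' (Suc j))" by auto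
      have "k < 2 * card V + 1" using Aa run_term[of _ s] by (meson not_le)
      then have k': "2 * card V + 1 - Suc k \<le> n" using k by linarith
      have "Rel s s' (run s (Suc k)) (run s' j)" unfolding run_Suc
        using trans_B[OF Wf_run Wf_run R tle tle' sle Aa] lt unfolding run_Suc by auto
      then show ?thesis using Suc.IH k' by blast
    qed
  qed
qed

lemma outer: "\<exists>k. Rel s s' (run s k) (run s' j)"
proof (induction j)
  case 0 then show ?case using Rel_init[of s s'] run_0 by metis
next
  case (Suc j)
  then obtain k where R: "Rel s s' (run s k) (run s' j)" by auto
  show ?case
  proof (cases "Aset s' (run s' j) = {}")
    case True then show ?thesis using R step_stop[OF True] run_Suc[of s' j] by metis
  next
    case False
    obtain k' where R': "Rel s s' (run s k') (run s' j)"
      and nx: "Aset s (run s k') = {} \<or> time (run s' (Suc j)) \<le> time (run s (Suc k'))"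
      using inner[OF False, of "2 * card V + 1", rule_format, of k] R by auto
    have "Rel s s' (run s k') (step s' (run s' j))"
      using trans_A[OF Wf_run Wf_run R' tle tle' sle False] nx unfolding run_Suc by auto
    then show ?thesis unfolding run_Suc by blast
  qed
qed

lemma final: "ybase (run s' (4 * card V + 4)) \<le> ybase (run s (4 * card V + 4))"
proof -
  define N where "N = 4 * card V + 4"
  obtain k where R: "Rel s s' (run s k) (run s' N)" using outer by blast
  define a where "a = run s k"
  define b where "b = run s' N"
  define T where "T = max (time a) (time b)"
  have stN: "Aset s (run s N) = {}" using run_term unfolding N_def by auto
  have "ybase b = ext_base b (time b)" using ext_base_self by simp
  also have "\<dots> \<le> ext_base b T" unfolding T_def by (intro ext_base_mono) auto
  also have "\<dots> \<le> ext_base a T" using R unfolding Rel_def T_def a_def b_def by auto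
  also have "\<dots> \<le> ybase (run s N)"
  proof (cases "Aset s a = {}")
    case True
    have "ext_base a T = ybase a" using ext_base_stop[OF tle Wf_run True[unfolded a_def]] unfolding a_def .
    also have "\<dots> \<le> ybase (run s N)"
    proof (cases "k \<le> N")
      case True then show ?thesis unfolding a_def using ybase_run_mono by auto
    next
      case False
      then have "run s k = run s N" using run_stop[OF stN, of "k - N"] by simp
      then show ?thesis unfolding a_def by simp
    qed
    finally show ?thesis .
  next
    case False
    have kN: "k < 2 * card V + 1" using False run_term[of k s] unfolding a_def by (meson not_le)
    have TT: "T \<le> time (step s a)" using R False unfolding Rel_def T_def a_def b_def by auto
    have "ext_base a T \<le> ext_base a (time (step s a))"
      using TT unfolding T_def by (intro ext_base_mono) auto
    also have "\<dots> = ybase (run s (Suc k))" unfolding run_Suc a_def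
      using ext_base_step[OF tle Wf_run False[unfolded a_def]] by simp
    also have "\<dots> \<le> ybase (run s N)" using kN unfolding N_def by (intro ybase_run_mono) auto
    finally show ?thesis .
  qed
  finally show ?thesis unfolding b_def N_def .
qed

end

end

theorem mainTheorem13:
  fixes V :: "'v set" and E :: "'v set set" and c :: "'v set \<Rightarrow> real"
    and t ts :: "'v \<Rightarrow> real" and q :: 'v and \<tau> :: real
  assumes "boosted_instance V E c t ts"
    and "q \<in> V"
    and "\<tau> \<ge> ts q"
  shows "Win V E c t ts q \<tau> \<ge> 0"
proof -
  have g: "graph_ok V E c" and tl: "\<forall>v\<in>V. 0 \<le> t v \<and> t v \<le> ts v"
    using assms(1) unfolding boosted_instance_def by auto
  interpret mg V E c t using g by unfold_locales
  define s' where "s' = ts(q := \<tau>)"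
  have tle: "\<forall>v\<in>V. t v \<le> ts v" using tl by auto
  have sle: "\<forall>v\<in>V. ts v \<le> s' v" using assms(3) unfolding s'_def by auto
  have tle': "\<forall>v\<in>V. t v \<le> s' v" using tle sle by force
  have "ybase (run s' (4 * card V + 4)) \<le> ybase (run ts (4 * card V + 4))"
    using final[OF tle tle' sle] .
  then show ?thesis
    unfolding Win_def y_base_def mg_run_def with_boost_def s'_def run_def by simp
qed


end
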